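(* Let $\alpha,\beta>0$, $k\ge0$ an integer, and $\lambda=\Gamma(\alpha k+\alpha+\beta)/\Gamma(\alpha k+\beta)$. If $X\sim\mathrm{MLFD}(\lambda,\alpha,\beta)$, then $P(X=k)=P(X=k+1)$ and $P(X=k)>P(X=j)$ for every integer $j\ge0$ with $j\notin\{k,k+1\}$; i.e. $X$ has exactly the two modes $k$ and $k+1$.
   Context: For $\alpha>0,\beta>0$ and $z\in\mathbb{C}$, the generalized Mittag-Leffler function is $E_{\alpha,\beta}(z)=\sum_{k=0}^\infty z^k/\Gamma(\alpha k+\beta)$. For $\lambda,\alpha,\beta>0$, the Mittag-Leffler function distribution $\mathrm{MLFD}(\lambda,\alpha,\beta)$ is the distribution on $\{0,1,2,\dots\}$ with $P(X=k)=\lambda^k/\{\Gamma(\alpha k+\beta)E_{\alpha,\beta}(\lambda)\}$. *)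

theory Defs
  imports "HOL-Analysis.Analysis"
begin

definition mittag_leffler :: "real \<Rightarrow> real \<Rightarrow> real \<Rightarrow> real" where
  "mittag_leffler \<alpha> \<beta> z = (\<Sum>k. z ^ k / Gamma (\<alpha> * real k + \<beta>))"

definition mlfd_pmf :: "real \<Rightarrow> real \<Rightarrow> real \<Rightarrow> nat \<Rightarrow> real" where
  "mlfd_pmf lam \<alpha> \<beta> k = lam ^ k / (Gamma (\<alpha> * real k + \<beta>) * mittag_leffler \<alpha> \<beta> lam)"

end

theory Submission
  imports Defs
begin

lemma lnG_diff_mono:
  fixes a x y :: real
  assumes "a > 0" "x > 0" "x < y"
  shows "ln_Gamma (x + a) - ln_Gamma x < ln_Gamma (y + a) - ln_Gamma y"
proof -
  have "\<exists>\<xi>. x < \<xi> \<and> \<xi> < y \<and> (ln_Gamma (y + a) - ln_Gamma y) - (ln_Gamma (x + a) - ln_Gamma x)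
          = (y - x) * (Digamma (\<xi> + a) - Digamma \<xi>)"
    using assms by (intro MVT2 derivative_eq_intros impI allI refl) (auto elim!: nonpos_Ints_cases)
  then obtain \<xi> where \<xi>: "x < \<xi>" "\<xi> < y"
    and e: "(ln_Gamma (y + a) - ln_Gamma y) - (ln_Gamma (x + a) - ln_Gamma x)
          = (y - x) * (Digamma (\<xi> + a) - Digamma \<xi>)" by blast
  have "Digamma \<xi> < Digamma (\<xi> + a)"
    using \<xi> assms by (intro Digamma_real_strict_mono) auto
  hence "(y - x) * (Digamma (\<xi> + a) - Digamma \<xi>) > 0" using assms by simp
  with e show ?thesis by linarith
qed

lemma G_ratio_mono:
  fixes a x y :: real
  assumes "a > 0" "x > 0" "x < y"
  shows "Gamma (x + a) / Gamma x < Gamma (y + a) / Gamma y"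
proof -
  have "Gamma (x + a) / Gamma x = exp (ln_Gamma (x + a) - ln_Gamma x)"
    using assms by (simp add: Gamma_real_pos_exp exp_diff)
  also have "\<dots> < exp (ln_Gamma (y + a) - ln_Gamma y)"
    using lnG_diff_mono[OF assms] by simp
  also have "\<dots> = Gamma (y + a) / Gamma y"
    using assms by (simp add: Gamma_real_pos_exp exp_diff)
  finally show ?thesis .
qed

theorem mainTheorem7:
  fixes \<alpha> \<beta> lam :: real and k :: nat
  assumes "\<alpha> > 0" and "\<beta> > 0"
    and "lam = Gamma (\<alpha> * real k + \<alpha> + \<beta>) / Gamma (\<alpha> * real k + \<beta>)"
  shows "mlfd_pmf lam \<alpha> \<beta> k = mlfd_pmf lam \<alpha> \<beta> (k + 1)
    \<and> (\<forall>j::nat. j \<notin> {k, k + 1} \<longrightarrow> mlfd_pmf lam \<alpha> \<beta> k > mlfd_pmf lam \<alpha> \<beta> j)"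
proof -
  define G where "G j = Gamma (\<alpha> * real j + \<alpha> + \<beta>) / Gamma (\<alpha> * real j + \<beta>)" for j :: nat
  define a where "a j = lam ^ j / Gamma (\<alpha> * real j + \<beta>)" for j :: nat
  have pos: "\<alpha> * real j + \<beta> > 0" for j using assms(1,2) by (simp add: add_nonneg_pos)
  have Gpos: "G j > 0" for j unfolding G_def using pos[of j] assms(1) by simp
  have Gmono: "i < j \<Longrightarrow> G i < G j" for i j
  proof -
    assume "i < j"
    hence "\<alpha> * real i + \<beta> < \<alpha> * real j + \<beta>" using assms(1) by simp
    from G_ratio_mono[OF assms(1) pos[of i] this] show ?thesis
      unfolding G_def by (simp add: add_ac)
  qed
  have lamG: "lam = G k" unfolding G_def assms(3) ..
  have lampos: "lam > 0" using Gpos lamG by simp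
  have apos: "a j > 0" for j unfolding a_def using lampos pos[of j] by simp
  have rec: "a (Suc j) = a j * lam / G j" for j
  proof -
    have "\<alpha> * real (Suc j) + \<beta> = \<alpha> * real j + \<alpha> + \<beta>" by (simp add: algebra_simps)
    moreover have "Gamma (\<alpha> * real j + \<beta>) > 0" using pos[of j] by simp
    ultimately show ?thesis unfolding a_def G_def by (simp add: field_simps)
  qed
  have up: "j < k \<Longrightarrow> a j < a (Suc j)" for j
  proof -
    assume "j < k"
    hence "G j < lam" using Gmono lamG by simp
    hence "lam / G j > 1" using Gpos[of j] by simp
    hence "a j * 1 < a j * (lam / G j)" using apos[of j] by (intro mult_strict_left_mono) auto
    thus ?thesis using rec[of j] by simp
  qed
  have down: "k < j \<Longrightarrow> a (Suc j) < a j" for j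
  proof -
    assume "k < j"
    hence "G j > lam" using Gmono lamG by simp
    hence "lam / G j < 1" using Gpos[of j] by simp
    hence "a j * (lam / G j) < a j * 1" using apos[of j] by (intro mult_strict_left_mono) auto
    thus ?thesis using rec[of j] by simp
  qed
  have eq: "a k = a (Suc k)" using rec[of k] lamG Gpos[of k] by simp
  have inc: "m < n \<Longrightarrow> n \<le> k \<Longrightarrow> a m < a n" for m n
  proof (induction n)
    case 0 then show ?case by simp
  next
    case (Suc n)
    show ?case
    proof (cases "m = n")
      case True then show ?thesis using up Suc.prems by simp
    next
      case False
      then have "a m < a n" using Suc by simp
      also have "a n < a (Suc n)" using up Suc.prems by simp
      finally show ?thesis .
    qed
  qed
  have dec: "k + 1 \<le> m \<Longrightarrow> m < n \<Longrightarrow> a n < a m" for m n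
  proof (induction n)
    case 0 then show ?case by simp
  next
    case (Suc n)
    show ?case
    proof (cases "m = n")
      case True then show ?thesis using down Suc.prems by simp
    next
      case False
      then have "a (Suc n) < a n" using down Suc.prems by simp
      also have "a n < a m" using Suc False by simp
      finally show ?thesis .
    qed
  qed
  have summ: "summable a"
  proof (rule summable_ratio_test[where c = "lam / G (Suc k)" and N = "Suc k"])
    show "lam / G (Suc k) < 1" using lamG Gmono[of k "Suc k"] Gpos[of "Suc k"] by simp
    fix n assume n: "Suc k \<le> n"
    show "norm (a (Suc n)) \<le> lam / G (Suc k) * norm (a n)"
    proof -
      have "G (Suc k) \<le> G n" using n Gmono[of "Suc k" n] by (cases "Suc k = n") auto
      hence "lam / G n \<le> lam / G (Suc k)" using lampos Gpos
        by (intro divide_left_mono) auto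
      hence "a n * (lam / G n) \<le> a n * (lam / G (Suc k))" using apos[of n]
        by (intro mult_left_mono) auto
      thus "norm (a (Suc n)) \<le> lam / G (Suc k) * norm (a n)"
        using rec[of n] apos[of n] apos[of "Suc n"] by (simp add: mult.commute)
    qed
  qed
  define E where "E = suminf a"
  have Epos: "E > 0" unfolding E_def using summ apos by (intro suminf_pos) auto
  have ME: "mittag_leffler \<alpha> \<beta> lam = E" unfolding mittag_leffler_def E_def a_def ..
  have pmf: "mlfd_pmf lam \<alpha> \<beta> j = a j / E" for j
    unfolding mlfd_pmf_def ME a_def by simp
  show ?thesis
  proof (intro conjI allI impI)
    show "mlfd_pmf lam \<alpha> \<beta> k = mlfd_pmf lam \<alpha> \<beta> (k + 1)" using eq by (simp add: pmf)
  next
    fix j :: nat assume j: "j \<notin> {k, k + 1}"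
    have "a j < a k"
    proof (cases "j < k")
      case True then show ?thesis using inc by simp
    next
      case False
      then have "k + 1 < j" using j by auto
      then have "a j < a (k + 1)" using dec[of "k+1" j] by simp
      then show ?thesis using eq by simp
    qed
    then show "mlfd_pmf lam \<alpha> \<beta> j < mlfd_pmf lam \<alpha> \<beta> k"
      using Epos by (simp add: pmf divide_strict_right_mono)
  qed
qed

end
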